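(* Let $B>1$, $0<\delta<\frac{1}{1+B}$ and $T>0$. For every $t\ge\delta^{-1}T$ there is a finite sequence $s_1,\dots,s_N$ of reals such that $t=s_1+\cdots+s_N$, $s_1=Bs_2$, $s_i=(1+\delta)s_{i+1}$ for $2\le i\le N-1$, and $T\le s_N\le2T$. *)

theory Defs
  imports Complex_Main
begin

end

theory Submission
  imports Defs
begin

lemma rev_sum: "(\<Sum>i=2..n+2. h (n+2-i)) = (\<Sum>k\<le>n. (h::nat\<Rightarrow>real) k)"
  by (rule sum.reindex_bij_witness[of _ "\<lambda>k. n+2-k" "\<lambda>i. n+2-i"]) auto

theorem lemma6p2:
  fixes B \<delta> T t :: real
  assumes "B > 1" and "0 < \<delta>" and "\<delta> < 1 / (1 + B)" and "T > 0"
    and "t \<ge> T / \<delta>"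
  shows "\<exists>(N::nat) (s::nat \<Rightarrow> real). N \<ge> 2 \<and>
           t = (\<Sum>i=1..N. s i) \<and>
           s 1 = B * s 2 \<and>
           (\<forall>i. 2 \<le> i \<and> i \<le> N - 1 \<longrightarrow> s i = (1 + \<delta>) * s (i + 1)) \<and>
           T \<le> s N \<and> s N \<le> 2 * T"
proof -
  define q where "q = 1 + \<delta>"
  define g where "g n = B * q^n + (\<Sum>k\<le>n. q^k)" for n
  define u where "u = t / T"
  have q1: "q > 1" using assms q_def by simp
  have grec: "g (Suc n) = q * g n + 1" for n
  proof -
    have a: "(\<Sum>k\<le>Suc n. q^k) = 1 + q * (\<Sum>k\<le>n. q^k)"
      by (simp only: sum.atMost_Suc_shift power_0 power_Suc sum_distrib_left)
    show ?thesis unfolding g_def a by (simp add: algebra_simps)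
  qed
  have g0: "g 0 = B + 1" unfolding g_def by simp
  have gpos: "g n \<ge> B + 1" for n
  proof (induction n)
    case 0 then show ?case using g0 by simp
  next
    case (Suc n) then show ?case using grec[of n] q1 assms(1)
      by (smt (verit) mult_le_cancel_right1)
  qed
  have gge: "g n \<ge> real n" for n
  proof (induction n)
    case 0 then show ?case using gpos[of 0] assms(1) by simp
  next
    case (Suc n) then show ?case using grec[of n] q1 gpos[of n] assms(1)
      by (smt (verit) mult_le_cancel_right1 of_nat_Suc)
  qed
  have dB: "\<delta> * (1 + B) < 1" using assms(3) assms(1) by (simp add: field_simps)
  have d1: "\<delta> < 1"
  proof -
    have "B * \<delta> > 0" using assms(1,2) by simp
    then show ?thesis using dB by (simp add: algebra_simps)
  qed
  have u1: "u \<ge> 1 / \<delta>"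
  proof -
    have "T / \<delta> / T = 1 / \<delta>" using assms(4) by simp
    then show ?thesis using assms(4,5) u_def divide_right_mono[OF assms(5), of T] by simp
  qed
  have uB: "u \<ge> B + 1"
  proof -
    have "1 / \<delta> > B + 1" using dB assms(2) by (simp add: field_simps)
    then show ?thesis using u1 by simp
  qed
  define S where "S = {n. g n \<le> u}"
  have finS: "finite S"
  proof (rule finite_subset)
    show "S \<subseteq> {..nat \<lceil>u\<rceil>}"
    proof
      fix m assume "m \<in> S"
      then have "real m \<le> u" using gge[of m] S_def by auto
      then have "real m \<le> real (nat \<lceil>u\<rceil>)" by linarith
      then show "m \<in> {..nat \<lceil>u\<rceil>}" by simp
    qed
  qed simp
  have "0 \<in> S" unfolding S_def using g0 uB by simp
  define n where "n = Max S"
  have nS: "g n \<le> u" using Max_in[OF finS] \<open>0 \<in> S\<close> n_def S_def by auto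
  have nS': "g (Suc n) > u"
  proof (rule ccontr)
    assume "\<not> ?thesis"
    then have "Suc n \<in> S" unfolding S_def by simp
    then show False using Max_ge[OF finS] n_def by fastforce
  qed
  have g2: "g (Suc n) \<le> 2 * g n"
  proof -
    have "(1 - \<delta>) * g n \<ge> (1 - \<delta>) * (B + 1)"
      using gpos[of n] d1 by (intro mult_left_mono) auto
    moreover have "(1 - \<delta>) * (B + 1) \<ge> 1" using dB assms(1,2)
      by (simp add: algebra_simps)
    ultimately show ?thesis using grec[of n] q_def by (simp add: algebra_simps)
  qed
  have gnpos: "g n > 0" using gpos[of n] assms(1) by simp
  define x where "x = t / g n"
  define N where "N = n + 2"
  define s where "s i = (if i = 1 then B * q^n * x else q^(N - i) * x)" for i
  have tpos: "t > 0" using u1 assms(2,4) u_def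
    by (smt (verit, best) divide_pos_pos divide_nonpos_pos)
  have sum: "(\<Sum>i=1..N. s i) = x * g n"
  proof -
    have "{1..N} = insert 1 {2..n+2}" unfolding N_def by auto
    then have "(\<Sum>i=1..N. s i) = s 1 + (\<Sum>i=2..n+2. s i)" by simp
    also have "(\<Sum>i=2..n+2. s i) = (\<Sum>i=2..n+2. q^(n+2-i) * x)"
      by (rule sum.cong) (auto simp: s_def N_def)
    also have "\<dots> = (\<Sum>k\<le>n. q^k * x)" by (rule rev_sum)
    finally show ?thesis by (simp add: s_def g_def algebra_simps sum_distrib_left sum_distrib_right)
  qed
  have xlo: "T \<le> x"
  proof -
    have "g n * T \<le> t" using nS u_def assms(4) by (simp add: field_simps)
    then show ?thesis using gnpos unfolding x_def by (simp add: pos_le_divide_eq mult.commute)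
  qed
  have xhi: "x \<le> 2 * T"
  proof -
    have "t < g (Suc n) * T" using nS' u_def assms(4) by (simp add: field_simps)
    also have "\<dots> \<le> 2 * g n * T" using g2 assms(4) by simp
    finally show ?thesis using gnpos unfolding x_def by (simp add: pos_divide_le_eq ac_simps)
  qed
  show ?thesis
  proof (intro exI conjI)
    show "2 \<le> N" by (simp add: N_def)
    show "t = (\<Sum>i=1..N. s i)" using sum x_def gnpos by simp
    show "s 1 = B * s 2" by (simp add: s_def N_def)
    show "\<forall>i. 2 \<le> i \<and> i \<le> N - 1 \<longrightarrow> s i = (1 + \<delta>) * s (i + 1)"
    proof (intro allI impI)
      fix i assume "2 \<le> i \<and> i \<le> N - 1"
      then have "N - i = Suc (N - (i+1))" unfolding N_def by auto
      then show "s i = (1 + \<delta>) * s (i + 1)" using \<open>2 \<le> i \<and> i \<le> N - 1\<close>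
        by (simp add: s_def q_def)
    qed
    show "T \<le> s N" using xlo by (simp add: s_def N_def)
    show "s N \<le> 2 * T" using xhi by (simp add: s_def N_def)
  qed
qed

end
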